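(* Let $\mathcal L$ be a finite distributive lattice of rank $r$, let $0\le i\le j\le r$, and let $\mathcal L_{i,j}=\{p\in\mathcal L: i\le\operatorname{rank}p\le j\}$. Then there exist a poset ideal $\mathcal I$ and a poset coideal $\mathcal J$ of $\mathcal L$ such that $H_{\mathcal L_{i,j}}=H_{\mathcal I\cap\mathcal J}=H_{\mathcal I}\cap H_{\mathcal J}$.
   Context: A finite distributive lattice is graded: all maximal chains have the same length $r$ (its rank), and $\operatorname{rank}p$ denotes the rank function value of $p$ ($0$ at the minimum, increasing by $1$ along cover relations). Let $P$ be the set of join-irreducible elements of $\mathcal L$ (elements with exactly one lower neighbor); for $p\in\mathcal L$ put $\ell(p)=\{q\in P:q\le p\}$. Let $K$ be a field, $S=K[x_p,y_p:p\in P]$, $u_q=\prod_{p\in\ell(q)}x_p\prod_{p\in P\setminus\ell(q)}y_p$, and for $\mathcal S\subseteq\mathcal L$ let $H_{\mathcal S}=(u_q:q\in\mathcal S)$. Poset ideals are closed downward, poset coideals upward. *)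

theory Defs
  imports Main "HOL-Library.Poly_Mapping"
begin

text \<open>Polynomials over K in variables of type 'v are
  finitely supported maps from monomials (finitely supported exponent maps) to K. The variable x_p is Inl p, the variable y_p is Inr p.\<close>

definition covers :: "'a::order \<Rightarrow> 'a \<Rightarrow> bool" where
  "covers q p \<longleftrightarrow> q < p \<and> \<not> (\<exists>z. q < z \<and> z < p)"

definition join_irreducibles :: "'a::{finite,distrib_lattice} set" where
  "join_irreducibles = {p. card {q. covers q p} = 1}"

text \<open>Rank: length of a longest chain from the minimum to p (well defined as the
  lattice is graded); equals number of elements of a longest chain below p minus 1.\<close>
definition lrank :: "'a::{finite,distrib_lattice} \<Rightarrow> nat" where
  "lrank p = Max {length xs | xs. xs \<noteq> [] \<and> sorted_wrt (<) xs \<and> (\<forall>x\<in>set xs. x \<le> p)} - 1"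

definition lattice_rank :: "'a::{finite,distrib_lattice} itself \<Rightarrow> nat" where
  "lattice_rank _ = Max (range (lrank :: 'a \<Rightarrow> nat))"

definition ell :: "'a::{finite,distrib_lattice} \<Rightarrow> 'a set" where
  "ell p = {q \<in> join_irreducibles. q \<le> p}"

definition Var :: "'v \<Rightarrow> ('v \<Rightarrow>\<^sub>0 nat) \<Rightarrow>\<^sub>0 'k::field" where
  "Var v = Poly_Mapping.single (Poly_Mapping.single v 1) 1"

text \<open>The polynomial ring S = K[x_p, y_p : p \<in> P], as the set of polynomials
  involving only the variables x_p, y_p with p a join-irreducible.\<close>
definition Sring :: "((('a::{finite,distrib_lattice} + 'a) \<Rightarrow>\<^sub>0 nat) \<Rightarrow>\<^sub>0 'k::field) set" where
  "Sring = {f. \<forall>m \<in> Poly_Mapping.keys f. Poly_Mapping.keys m \<subseteq> Inl ` join_irreducibles \<union> Inr ` join_irreducibles}"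

definition umon :: "'a::{finite,distrib_lattice} \<Rightarrow> (('a + 'a) \<Rightarrow>\<^sub>0 nat) \<Rightarrow>\<^sub>0 'k::field" where
  "umon q = (\<Prod>p\<in>ell q. Var (Inl p)) * (\<Prod>p\<in>join_irreducibles - ell q. Var (Inr p))"

definition ideal_S :: "((('a::{finite,distrib_lattice} + 'a) \<Rightarrow>\<^sub>0 nat) \<Rightarrow>\<^sub>0 'k::field) set
    \<Rightarrow> ((('a + 'a) \<Rightarrow>\<^sub>0 nat) \<Rightarrow>\<^sub>0 'k) set" where
  "ideal_S G = {(\<Sum>g\<in>G. c g * g) | c. \<forall>g\<in>G. c g \<in> Sring}"

definition H :: "'a::{finite,distrib_lattice} set \<Rightarrow> ((('a + 'a) \<Rightarrow>\<^sub>0 nat) \<Rightarrow>\<^sub>0 'k::field) set" where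
  "H T = ideal_S (umon ` T)"

definition poset_ideal :: "'a::order set \<Rightarrow> bool" where
  "poset_ideal I \<longleftrightarrow> (\<forall>x\<in>I. \<forall>y. y \<le> x \<longrightarrow> y \<in> I)"

definition poset_coideal :: "'a::order set \<Rightarrow> bool" where
  "poset_coideal J \<longleftrightarrow> (\<forall>x\<in>J. \<forall>y. x \<le> y \<longrightarrow> y \<in> J)"

end

theory Submission
  imports Defs
begin

unbundle lattice_syntax

definition chains :: "'a::{finite,distrib_lattice} \<Rightarrow> 'a list set" where
  "chains p = {xs. xs \<noteq> [] \<and> sorted_wrt (<) xs \<and> (\<forall>x\<in>set xs. x \<le> p)}"

lemma sorted_less_distinct: "sorted_wrt ((<)::'a::order\<Rightarrow>_) xs \<Longrightarrow> distinct xs"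
  by (induction xs) auto

lemma lrank_chains: "lrank p = Max (length ` chains p) - 1"
  unfolding lrank_def chains_def by (simp add: image_def) (metis)

lemma fin_chains: "finite (length ` (chains (p::'a::{finite,distrib_lattice})))"
proof -
  have "length ` chains p \<subseteq> {..card (UNIV::'a set)}"
  proof
    fix n assume "n \<in> length ` chains p"
    then obtain xs where "xs \<in> chains p" "n = length xs" by auto
    then have "distinct xs" using sorted_less_distinct unfolding chains_def by auto
    then have "length xs = card (set xs)" by (simp add: distinct_card)
    also have "\<dots> \<le> card (UNIV::'a set)" by (rule card_mono) auto
    finally show "n \<in> {..card (UNIV::'a set)}" using \<open>n = length xs\<close> by simp
  qed
  then show ?thesis using finite_subset by blast
qed

lemma chain_ne: "[p] \<in> chains p" unfolding chains_def by simp

lemma chain_len: "xs \<in> chains p \<Longrightarrow> length xs \<le> lrank p + 1"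
proof -
  assume a: "xs \<in> chains p"
  have "length xs \<le> Max (length ` chains p)" using a fin_chains by (intro Max_ge) auto
  moreover have "Max (length ` chains p) \<ge> 1"
    using chain_ne fin_chains by (metis Max_ge image_eqI length_Cons list.size(3) One_nat_def)
  ultimately show ?thesis unfolding lrank_chains by linarith
qed

lemma chain_ex: "\<exists>xs\<in>chains p. length xs = lrank p + 1"
proof -
  have ne: "length ` chains p \<noteq> {}" using chain_ne by auto
  have "Max (length ` chains p) \<in> length ` chains p" using Max_in[OF fin_chains ne] .
  then obtain xs where xs: "xs \<in> chains p" "length xs = Max (length ` chains p)" by auto
  then have "length xs \<ge> 1" unfolding chains_def by (cases xs) auto
  then show ?thesis using xs unfolding lrank_chains by (intro bexI[of _ xs]) auto
qed

lemma lrank_mono: "(x::'a::{finite,distrib_lattice}) \<le> y \<Longrightarrow> lrank x \<le> lrank y"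
proof -
  assume "x \<le> y"
  obtain xs where "xs \<in> chains x" "length xs = lrank x + 1" using chain_ex by blast
  then have "xs \<in> chains y" using \<open>x \<le> y\<close> unfolding chains_def by auto
  then show ?thesis using chain_len \<open>length xs = _\<close> by fastforce
qed

lemma lrank_strict: "(x::'a::{finite,distrib_lattice}) < y \<Longrightarrow> lrank x < lrank y"
proof -
  assume "x < y"
  obtain xs where xs: "xs \<in> chains x" "length xs = lrank x + 1" using chain_ex by blast
  then have "xs @ [y] \<in> chains y" using \<open>x < y\<close> unfolding chains_def
    by (auto simp: sorted_wrt_append intro: le_less_trans less_imp_le)
  then show ?thesis using chain_len xs by fastforce
qed

lemma lower_cover: "(x::'a::{finite,distrib_lattice}) < y \<Longrightarrow> \<exists>c. covers c y \<and> x \<le> c"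
proof -
  assume "x < y"
  have "finite {z. x \<le> z \<and> z < y}" "{z. x \<le> z \<and> z < y} \<noteq> {}" using \<open>x < y\<close> by auto
  from finite_has_maximal[OF this] obtain m where m: "x \<le> m" "m < y"
    "\<forall>b\<in>{z. x \<le> z \<and> z < y}. m \<le> b \<longrightarrow> m = b" by auto
  have "covers m y" unfolding covers_def
  proof (intro conjI notI)
    show "m < y" by fact
    assume "\<exists>z. m < z \<and> z < y"
    then obtain z where "m < z" "z < y" by auto
    have "x \<le> z" using order_trans[OF m(1) less_imp_le[OF \<open>m < z\<close>]] .
    then have "z \<in> {z. x \<le> z \<and> z < y}" using \<open>z < y\<close> by simp
    then have "m = z" using m(3) less_imp_le[OF \<open>m < z\<close>] by simp
    then show False using \<open>m < z\<close> by simp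
  qed
  then show ?thesis using m by auto
qed

lemma sorted_last: "sorted_wrt ((<)::'a::order\<Rightarrow>_) ys \<Longrightarrow> ys \<noteq> [] \<Longrightarrow> z \<in> set ys \<Longrightarrow> z \<le> last ys"
proof -
  assume a: "sorted_wrt (<) ys" "ys \<noteq> []" "z \<in> set ys"
  have e: "ys = butlast ys @ [last ys]" using a(2) by simp
  show ?thesis
  proof (cases "z = last ys")
    case False
    then have "z \<in> set (butlast ys)" using a(3) e by (metis Un_iff empty_iff empty_set set_ConsD set_append)
    then show ?thesis using a(1) e by (metis less_imp_le sorted_wrt_append list.set_intros(1))
  qed simp
qed

lemma lrank_cover_ex: "0 < lrank (y::'a::{finite,distrib_lattice}) \<Longrightarrow> \<exists>c. covers c y \<and> lrank y \<le> lrank c + 1"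
proof -
  assume "0 < lrank y"
  obtain xs where xs: "xs \<in> chains y" "length xs = lrank y + 1" using chain_ex by blast
  then have "xs \<noteq> []" by auto
  then obtain ys a where e: "xs = ys @ [a]" by (metis append_butlast_last_id)
  have "ys \<noteq> []" using xs e \<open>0 < lrank y\<close> by auto
  have sy: "sorted_wrt (<) ys" and ba: "last ys < a" and ay: "a \<le> y"
    using xs(1) e \<open>ys \<noteq> []\<close> unfolding chains_def by (auto simp: sorted_wrt_append)
  have "last ys < y" using less_le_trans[OF ba ay] .
  then obtain c where c: "covers c y" "last ys \<le> c" using lower_cover by blast
  have "\<forall>x\<in>set ys. x \<le> c"
  proof
    fix x assume "x \<in> set ys"
    then have "x \<le> last ys" using sorted_last[OF sy \<open>ys \<noteq> []\<close>] by blast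
    then show "x \<le> c" using c(2) by (rule order_trans)
  qed
  then have "ys \<in> chains c" using sy \<open>ys \<noteq> []\<close> unfolding chains_def by blast
  then have "length ys \<le> lrank c + 1" by (rule chain_len)
  then show ?thesis using c xs e by auto
qed

lemma diamond:
  assumes "covers c1 (z::'a::{finite,distrib_lattice})" "covers c2 z" "c1 \<noteq> c2"
  shows "covers (c1 \<sqinter> c2) c1"
  unfolding covers_def
proof (intro conjI notI)
  have lt: "c1 < z" "c2 < z" using assms unfolding covers_def by auto
  show "c1 \<sqinter> c2 < c1"
  proof (rule ccontr)
    assume "\<not> c1 \<sqinter> c2 < c1"
    then have "c1 \<sqinter> c2 = c1" by (simp add: less_le)
    then have "c1 \<le> c2" by (simp add: le_iff_inf)
    then have "c1 < c2" using assms(3) by (simp add: less_le)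
    then show False using assms(1) lt(2) unfolding covers_def by blast
  qed
  assume "\<exists>e. c1 \<sqinter> c2 < e \<and> e < c1"
  then obtain e where e: "c1 \<sqinter> c2 < e" "e < c1" by auto
  have ez: "e \<squnion> c2 \<le> z" using less_imp_le[OF less_trans[OF e(2) lt(1)]] less_imp_le[OF lt(2)] by simp
  have ne: "e \<squnion> c2 \<noteq> c2"
  proof
    assume "e \<squnion> c2 = c2"
    then have "e \<le> c2" by (simp add: le_iff_sup)
    then have "e \<le> c1 \<sqinter> c2" using less_imp_le[OF e(2)] by simp
    then show False using e(1) by (simp add: leD)
  qed
  have "c2 < e \<squnion> c2" using ne by (simp add: less_le)
  then have "\<not> e \<squnion> c2 < z" using assms(2) unfolding covers_def by blast
  then have ez2: "e \<squnion> c2 = z" using ez by (simp add: less_le)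
  have "c1 = c1 \<sqinter> z" using less_imp_le[OF lt(1)] by (simp add: inf.absorb1)
  also have "\<dots> = (c1 \<sqinter> e) \<squnion> (c1 \<sqinter> c2)" unfolding ez2[symmetric] by (rule inf_sup_distrib1)
  also have "\<dots> = e \<squnion> (c1 \<sqinter> c2)" using less_imp_le[OF e(2)] by (simp add: inf.absorb2)
  also have "\<dots> = e" using less_imp_le[OF e(1)] by (simp add: sup.absorb1)
  finally show False using e(2) by simp
qed

lemma graded: "covers c (z::'a::{finite,distrib_lattice}) \<Longrightarrow> lrank z = Suc (lrank c)"
proof (induction "lrank z" arbitrary: z c rule: less_induct)
  case less
  have "c < z" using less.prems unfolding covers_def by auto
  then have lt: "lrank c < lrank z" by (rule lrank_strict)
  then have "0 < lrank z" by simp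
  then obtain c' where c': "covers c' z" "lrank z \<le> lrank c' + 1" using lrank_cover_ex by blast
  show ?case
  proof (cases "c' = c")
    case True then show ?thesis using c' lt by auto
  next
    case False
    have ne: "c \<noteq> c'" "c' \<noteq> c" using False by auto
    have d1: "covers (c \<sqinter> c') c" using diamond[OF less.prems c'(1) ne(1)] .
    have "covers (c' \<sqinter> c) c'" using diamond[OF c'(1) less.prems ne(2)] .
    then have d2: "covers (c \<sqinter> c') c'" by (simp add: inf_commute)
    have "c' < z" using c' unfolding covers_def by auto
    then have "lrank c' < lrank z" by (rule lrank_strict)
    then have "lrank c = lrank c'" using less.hyps[OF lt d1] less.hyps[of c' _, OF _ d2] by simp
    then show ?thesis using c' lt by auto
  qed
qed

lemma ivt: "(x::'a::{finite,distrib_lattice}) \<le> y \<Longrightarrow> lrank x \<le> k \<Longrightarrow> k \<le> lrank y \<Longrightarrow>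
   \<exists>z. x \<le> z \<and> z \<le> y \<and> lrank z = k"
proof (induction "lrank y" arbitrary: y rule: less_induct)
  case less
  show ?case
  proof (cases "lrank y = k")
    case True then show ?thesis using less.prems by auto
  next
    case False
    then have "x \<noteq> y" using less.prems by auto
    then have "x < y" using less.prems by auto
    then obtain c where c: "covers c y" "x \<le> c" using lower_cover by blast
    have "lrank y = Suc (lrank c)" using graded[OF c(1)] .
    then have "k \<le> lrank c" "lrank c < lrank y" using False less.prems by auto
    from less.hyps[OF this(2) c(2) less.prems(2) this(1)] obtain z where
      "x \<le> z" "z \<le> c" "lrank z = k" by auto
    moreover have "c \<le> y" using c unfolding covers_def by auto
    ultimately have "x \<le> z \<and> z \<le> y \<and> lrank z = k" using order_trans by blast
    then show ?thesis by (intro exI[of _ z])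
  qed
qed


abbreviation JI where "JI \<equiv> join_irreducibles"

definition Sv :: "('a::{finite,distrib_lattice} + 'a) set" where
  "Sv = Inl ` JI \<union> Inr ` JI"

lemma Sring_iff: "f \<in> Sring \<longleftrightarrow> (\<forall>m \<in> Poly_Mapping.keys f. Poly_Mapping.keys m \<subseteq> Sv)"
  unfolding Sring_def Sv_def by simp

definition um :: "'a::{finite,distrib_lattice} \<Rightarrow> ('a + 'a) \<Rightarrow>\<^sub>0 nat" where
  "um t = (\<Sum>p\<in>ell t. Poly_Mapping.single (Inl p) 1) + (\<Sum>p\<in>JI - ell t. Poly_Mapping.single (Inr p) 1)"

definition dv :: "'a::{finite,distrib_lattice} \<Rightarrow> (('a + 'a) \<Rightarrow>\<^sub>0 nat) \<Rightarrow> bool" where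
  "dv t m \<longleftrightarrow> (\<forall>v. Poly_Mapping.lookup (um t) v \<le> Poly_Mapping.lookup m v)"

lemma prod_single: "finite A \<Longrightarrow>
  (\<Prod>x\<in>A. Poly_Mapping.single (f x) (1::'k::field)) = Poly_Mapping.single (\<Sum>x\<in>A. f x) 1"
  by (induction A rule: finite_induct) (auto simp: mult_single)

lemma umon_eq: "(umon t :: (('a::{finite,distrib_lattice} + 'a) \<Rightarrow>\<^sub>0 nat) \<Rightarrow>\<^sub>0 'k::field) = Poly_Mapping.single (um t) 1"
  unfolding umon_def um_def Var_def by (simp add: prod_single mult_single)

lemma ell_JI: "ell t \<subseteq> JI" unfolding ell_def by auto

lemma lookup_um_Inl: "Poly_Mapping.lookup (um t) (Inl a) = (if a \<in> ell t then 1 else 0)"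
  unfolding um_def by (simp add: lookup_add lookup_sum lookup_single when_def)

lemma lookup_um_Inr: "Poly_Mapping.lookup (um t) (Inr a) = (if a \<in> JI \<and> a \<notin> ell t then 1 else 0)"
  unfolding um_def by (simp add: lookup_add lookup_sum lookup_single when_def)

lemma keys_um: "Poly_Mapping.keys (um t) \<subseteq> Sv"
proof
  fix v assume v: "v \<in> Poly_Mapping.keys (um t)"
  show "v \<in> Sv"
  proof (cases v)
    case (Inl a) then show ?thesis using v ell_JI[of t] by (auto simp: in_keys_iff lookup_um_Inl Sv_def split: if_splits)
  next
    case (Inr a) then show ?thesis using v by (auto simp: in_keys_iff lookup_um_Inr Sv_def split: if_splits)
  qed
qed

lemma S0: "0 \<in> Sring" unfolding Sring_iff by simp

lemma Sadd: "a \<in> Sring \<Longrightarrow> b \<in> Sring \<Longrightarrow> a + b \<in> Sring"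
  unfolding Sring_iff
proof (intro ballI)
  fix m assume a: "\<forall>m\<in>Poly_Mapping.keys a. Poly_Mapping.keys m \<subseteq> Sv"
    and b: "\<forall>m\<in>Poly_Mapping.keys b. Poly_Mapping.keys m \<subseteq> Sv"
    and m: "m \<in> Poly_Mapping.keys (a + b)"
  have "m \<in> Poly_Mapping.keys a \<union> Poly_Mapping.keys b" using subsetD[OF keys_add m] .
  then show "Poly_Mapping.keys m \<subseteq> Sv" using a b by blast
qed

lemma keys_add_nat: "Poly_Mapping.keys ((a::'v \<Rightarrow>\<^sub>0 nat) + b) \<subseteq> Poly_Mapping.keys a \<union> Poly_Mapping.keys b"
  by (rule keys_add)

lemma Smult: "a \<in> Sring \<Longrightarrow> b \<in> Sring \<Longrightarrow> a * b \<in> Sring"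
  unfolding Sring_iff
proof (intro ballI)
  fix m assume a: "\<forall>m\<in>Poly_Mapping.keys a. Poly_Mapping.keys m \<subseteq> Sv"
    and b: "\<forall>m\<in>Poly_Mapping.keys b. Poly_Mapping.keys m \<subseteq> Sv"
    and m: "m \<in> Poly_Mapping.keys (a * b)"
  then obtain x y where "m = x + y" "x \<in> Poly_Mapping.keys a" "y \<in> Poly_Mapping.keys b"
    using keys_mult by blast
  then show "Poly_Mapping.keys m \<subseteq> Sv" using a b keys_add_nat[of x y] by blast
qed

lemma Ssum: "finite A \<Longrightarrow> (\<And>x. x \<in> A \<Longrightarrow> F x \<in> Sring) \<Longrightarrow> sum F A \<in> Sring"
  by (induction A rule: finite_induct) (auto simp: S0 Sadd)

lemma Ssingle: "Poly_Mapping.keys m \<subseteq> Sv \<Longrightarrow> Poly_Mapping.single m c \<in> Sring"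
  unfolding Sring_iff by simp

lemma I0: "0 \<in> ideal_S G"
  unfolding ideal_S_def using S0 by (auto intro!: exI[of _ "\<lambda>_. 0"])

lemma Iadd: "a \<in> ideal_S G \<Longrightarrow> b \<in> ideal_S G \<Longrightarrow> a + b \<in> ideal_S G"
proof -
  assume "a \<in> ideal_S G" "b \<in> ideal_S G"
  then obtain c1 c2 where c: "a = (\<Sum>g\<in>G. c1 g * g)" "\<forall>g\<in>G. c1 g \<in> Sring"
    "b = (\<Sum>g\<in>G. c2 g * g)" "\<forall>g\<in>G. c2 g \<in> Sring" unfolding ideal_S_def by auto
  then have "a + b = (\<Sum>g\<in>G. (c1 g + c2 g) * g)" by (simp add: distrib_right sum.distrib)
  moreover have "\<forall>g\<in>G. c1 g + c2 g \<in> Sring" using c Sadd by blast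
  ultimately have "\<exists>c. a + b = (\<Sum>g\<in>G. c g * g) \<and> (\<forall>g\<in>G. c g \<in> Sring)"
    by (intro exI[of _ "\<lambda>g. c1 g + c2 g"]) simp
  then show ?thesis unfolding ideal_S_def by simp
qed

lemma Imul: "finite G \<Longrightarrow> s \<in> Sring \<Longrightarrow> g \<in> G \<Longrightarrow> s * g \<in> ideal_S G"
proof -
  assume G: "finite G" "s \<in> Sring" "g \<in> G"
  have "(\<Sum>h\<in>G. (if h = g then s else 0) * h) = (\<Sum>h\<in>G. if h = g then s * g else 0)"
    by (rule sum.cong) auto
  also have "\<dots> = s * g" using G by simp
  finally show ?thesis unfolding ideal_S_def using G S0
    by (auto intro!: exI[of _ "\<lambda>h. if h = g then s else 0"])
qed

lemma Isum: "finite A \<Longrightarrow> (\<And>x. x \<in> A \<Longrightarrow> F x \<in> ideal_S G) \<Longrightarrow> sum F A \<in> ideal_S G"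
  by (induction A rule: finite_induct) (auto simp: I0 Iadd)

lemma umon_S: "(umon t :: (('a::{finite,distrib_lattice} + 'a) \<Rightarrow>\<^sub>0 nat) \<Rightarrow>\<^sub>0 'k::field) \<in> Sring"
  unfolding umon_eq by (rule Ssingle[OF keys_um])

lemma poly_sum_rep: "f = (\<Sum>m\<in>Poly_Mapping.keys f. Poly_Mapping.single m (Poly_Mapping.lookup f m))"
proof (rule poly_mapping_eqI)
  fix k
  show "Poly_Mapping.lookup f k = Poly_Mapping.lookup (\<Sum>m\<in>Poly_Mapping.keys f. Poly_Mapping.single m (Poly_Mapping.lookup f m)) k"
    by (simp add: lookup_sum lookup_single when_def in_keys_iff)
qed

lemma H_char: "(H T :: ((('a::{finite,distrib_lattice} + 'a) \<Rightarrow>\<^sub>0 nat) \<Rightarrow>\<^sub>0 'k::field) set)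
   = {f. f \<in> Sring \<and> (\<forall>m\<in>Poly_Mapping.keys f. \<exists>t\<in>T. dv t m)}"
proof (intro set_eqI iffI)
  fix f :: "(('a + 'a) \<Rightarrow>\<^sub>0 nat) \<Rightarrow>\<^sub>0 'k"
  assume "f \<in> H T"
  then obtain c where c: "f = (\<Sum>g\<in>umon ` T. c g * g)" "\<forall>g\<in>umon ` T. c g \<in> Sring"
    unfolding H_def ideal_S_def by auto
  have "f \<in> Sring" unfolding c(1) using c(2) umon_S by (intro Ssum) (auto intro: Smult)
  moreover have "\<forall>m\<in>Poly_Mapping.keys f. \<exists>t\<in>T. dv t m"
  proof
    fix m assume "m \<in> Poly_Mapping.keys f"
    then have "m \<in> Poly_Mapping.keys (\<Sum>g\<in>umon ` T. c g * g)" using c(1) by simp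
    then have "m \<in> (\<Union>g\<in>umon ` T. Poly_Mapping.keys (c g * g))" by (rule subsetD[OF keys_sum])
    then obtain g where g: "g \<in> umon ` T" "m \<in> Poly_Mapping.keys (c g * g)" by blast
    then obtain t where t0: "t \<in> T" "g = umon t" by blast
    then have t: "t \<in> T" "g = Poly_Mapping.single (um t) 1" by (simp_all add: umon_eq)
    then obtain x y where "m = x + y" "y \<in> Poly_Mapping.keys (Poly_Mapping.single (um t) (1::'k))"
      using g keys_mult by blast
    then have "m = x + um t" by simp
    then have "dv t m" unfolding dv_def by (simp add: lookup_add)
    then show "\<exists>t\<in>T. dv t m" using t by blast
  qed
  ultimately show "f \<in> {f. f \<in> Sring \<and> (\<forall>m\<in>Poly_Mapping.keys f. \<exists>t\<in>T. dv t m)}" by blast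
next
  fix f :: "(('a + 'a) \<Rightarrow>\<^sub>0 nat) \<Rightarrow>\<^sub>0 'k"
  assume "f \<in> {f. f \<in> Sring \<and> (\<forall>m\<in>Poly_Mapping.keys f. \<exists>t\<in>T. dv t m)}"
  then have fS: "f \<in> Sring" and fd: "\<forall>m\<in>Poly_Mapping.keys f. \<exists>t\<in>T. dv t m" by auto
  have fin: "finite (umon ` T :: ((('a + 'a) \<Rightarrow>\<^sub>0 nat) \<Rightarrow>\<^sub>0 'k) set)" by simp
  have "(\<Sum>m\<in>Poly_Mapping.keys f. Poly_Mapping.single m (Poly_Mapping.lookup f m)) \<in> H T"
    unfolding H_def
  proof (rule Isum)
    fix m assume m: "m \<in> Poly_Mapping.keys f"
    then obtain t where t: "t \<in> T" "dv t m" using fd by blast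
    have e: "m = (m - um t) + um t"
      using t(2) unfolding dv_def by (intro poly_mapping_eqI) (simp add: lookup_add lookup_minus)
    have "Poly_Mapping.keys (m - um t) \<subseteq> Poly_Mapping.keys m"
      by (auto simp: in_keys_iff lookup_minus)
    then have "Poly_Mapping.keys (m - um t) \<subseteq> Sv" using fS m unfolding Sring_iff by blast
    then have s: "Poly_Mapping.single (m - um t) (Poly_Mapping.lookup f m) \<in> Sring" by (rule Ssingle)
    have "Poly_Mapping.single m (Poly_Mapping.lookup f m)
        = Poly_Mapping.single (m - um t) (Poly_Mapping.lookup f m) * umon t"
      unfolding umon_eq mult_single by (simp flip: e)
    then show "Poly_Mapping.single m (Poly_Mapping.lookup f m) \<in> ideal_S (umon ` T)"
      using Imul[OF fin s] t(1) by simp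
  qed simp
  then show "f \<in> H T" by (subst poly_sum_rep[of f])
qed


lemma ell_inf: "ell (p \<sqinter> q) = ell p \<inter> ell q"
  unfolding ell_def by auto

lemma ell_mono: "(x::'a::{finite,distrib_lattice}) \<le> y \<Longrightarrow> ell x \<subseteq> ell y"
proof
  fix a assume xy: "x \<le> y" and a: "a \<in> ell x"
  then have "a \<le> x" "a \<in> JI" unfolding ell_def by auto
  then have "a \<le> y" "a \<in> JI" using order_trans[OF _ xy] by auto
  then show "a \<in> ell y" unfolding ell_def by simp
qed

lemma dv_combine:
  assumes "dv p m" "dv q m" "ell p \<inter> ell q \<subseteq> ell r" "ell r \<subseteq> ell q"
  shows "dv r m"
  unfolding dv_def
proof
  fix v
  show "Poly_Mapping.lookup (um r) v \<le> Poly_Mapping.lookup m v"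
  proof (cases v)
    case (Inl a)
    have "Poly_Mapping.lookup (um q) (Inl a) \<le> Poly_Mapping.lookup m (Inl a)"
      using assms(2) unfolding dv_def by blast
    then show ?thesis using Inl assms(4) by (auto simp: lookup_um_Inl split: if_splits)
  next
    case (Inr a)
    have "Poly_Mapping.lookup (um q) (Inr a) \<le> Poly_Mapping.lookup m (Inr a)"
         "Poly_Mapping.lookup (um p) (Inr a) \<le> Poly_Mapping.lookup m (Inr a)"
      using assms(1,2) unfolding dv_def by blast+
    then show ?thesis using Inr assms(3) by (auto simp: lookup_um_Inr split: if_splits)
  qed
qed

theorem lemma3p13:
  fixes i j :: nat
  assumes "i \<le> j" and "j \<le> lattice_rank TYPE('a::{finite,distrib_lattice})"
  shows "\<exists>I J :: 'a set. poset_ideal I \<and> poset_coideal J \<and>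
     (H {p. i \<le> lrank p \<and> lrank p \<le> j} :: ((('a + 'a) \<Rightarrow>\<^sub>0 nat) \<Rightarrow>\<^sub>0 'k::field) set)
       = H (I \<inter> J) \<and>
     (H (I \<inter> J) :: ((('a + 'a) \<Rightarrow>\<^sub>0 nat) \<Rightarrow>\<^sub>0 'k) set) = H I \<inter> H J"
proof -
  define I where "I = {p::'a. lrank p \<le> j}"
  define J where "J = {p::'a. i \<le> lrank p}"
  have IJ: "I \<inter> J = {p. i \<le> lrank p \<and> lrank p \<le> j}" unfolding I_def J_def by auto
  have pI: "poset_ideal I" unfolding poset_ideal_def I_def
  proof (intro ballI allI impI)
    fix x y :: 'a assume "x \<in> {p. lrank p \<le> j}" "y \<le> x"
    then show "y \<in> {p. lrank p \<le> j}" using lrank_mono[of y x] by simp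
  qed
  have pJ: "poset_coideal J" unfolding poset_coideal_def J_def
  proof (intro ballI allI impI)
    fix x y :: 'a assume "x \<in> {p. i \<le> lrank p}" "x \<le> y"
    then show "y \<in> {p. i \<le> lrank p}" using lrank_mono[of x y] by simp
  qed
  have key: "\<exists>r\<in>I \<inter> J. dv r m" if p: "p \<in> I" "dv p m" and q: "q \<in> J" "dv q m" for p q m
  proof -
    define k where "k = max (lrank (p \<sqinter> q)) i"
    have "lrank (p \<sqinter> q) \<le> lrank p" "lrank (p \<sqinter> q) \<le> lrank q"
      using lrank_mono[OF inf.cobounded1] lrank_mono[OF inf.cobounded2] by auto
    moreover have "lrank p \<le> j" "i \<le> lrank q" using p q unfolding I_def J_def by auto
    ultimately have k1: "lrank (p \<sqinter> q) \<le> k" "k \<le> lrank q" "i \<le> k" "k \<le> j"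
      unfolding k_def using assms(1) by auto
    obtain z where z: "p \<sqinter> q \<le> z" "z \<le> q" "lrank z = k"
      using ivt[OF inf.cobounded2 k1(1) k1(2)] by blast
    have "z \<in> I \<inter> J" using z k1 unfolding I_def J_def by auto
    moreover have "dv z m"
      using dv_combine[OF p(2) q(2)] ell_mono[OF z(1)] ell_mono[OF z(2)] ell_inf[of p q] by auto
    ultimately show ?thesis by blast
  qed
  have "(H (I \<inter> J) :: ((('a + 'a) \<Rightarrow>\<^sub>0 nat) \<Rightarrow>\<^sub>0 'k) set) = H I \<inter> H J"
  proof (intro set_eqI iffI)
    fix f :: "(('a + 'a) \<Rightarrow>\<^sub>0 nat) \<Rightarrow>\<^sub>0 'k"
    assume "f \<in> H (I \<inter> J)"
    then show "f \<in> H I \<inter> H J" unfolding H_char by blast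
  next
    fix f :: "(('a + 'a) \<Rightarrow>\<^sub>0 nat) \<Rightarrow>\<^sub>0 'k"
    assume "f \<in> H I \<inter> H J"
    then have f: "f \<in> Sring" "\<forall>m\<in>Poly_Mapping.keys f. \<exists>t\<in>I. dv t m"
      "\<forall>m\<in>Poly_Mapping.keys f. \<exists>t\<in>J. dv t m" unfolding H_char by auto
    have "\<forall>m\<in>Poly_Mapping.keys f. \<exists>t\<in>I \<inter> J. dv t m"
    proof
      fix m assume "m \<in> Poly_Mapping.keys f"
      then obtain p q where "p \<in> I" "dv p m" "q \<in> J" "dv q m" using f by blast
      then show "\<exists>t\<in>I \<inter> J. dv t m" by (rule key)
    qed
    then show "f \<in> H (I \<inter> J)" unfolding H_char using f(1) by blast
  qed
  then show ?thesis using pI pJ IJ by metis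
qed

end
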